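(* Let $F_2$ be the free group on $\{x,y\}$, $\sigma = (\{x\}, y)$, $\tau = (\{y\}, x)$, and let $u, v \in F_2$. Let $m$ be a positive integer and let $\Lambda$ be the set of all chains of the form $\tau^{m_k}\sigma^{l_k} \cdots \tau^{m_1}\sigma^{l_1}$ or $\tau^{-m_k}\sigma^{-l_k} \cdots \tau^{-m_1}\sigma^{-l_1}$ ($k \in \mathbb{N}$, all $l_i, m_i \ge 0$) of length $\sum_{i=1}^k (l_i+m_i) \le m$. Suppose that $\|\psi(u)\| = \|\psi(v)\|$ for every $\psi \in \Lambda$. Then $n([\psi(u)]; x) = n([\psi(v)]; x)$ and $n([\psi(u)]; y) = n([\psi(v)]; y)$ for every $\psi \in \Lambda$.
   Context: $\sigma$ is the automorphism with $\sigma(x) = xy$, $\sigma(y) = y$; $\tau$ is the automorphism with $\tau(y) = yx$, $\tau(x) = x$. For $w \in F_2$, $[w]$ denotes the cyclic word associated with $w$ (the set of cyclic permutations of a cyclically reduced word conjugate to $w$), and $\|w\|$ is its length. For a cyclic word $w$ and a letter $a \in \{x^{\pm1},y^{\pm1}\}$, $n(w;a)$ denotes the total number of occurrences of $a$ and $a^{-1}$ in $w$. *)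

theory Defs
  imports Main
begin

text \<open>A letter is a generator together with
  a flag telling whether it is inverted. An element of F_2 is represented by any
  word; all notions below depend only on the free reduction of the word.\<close>

datatype gen = X | Y

type_synonym letter = "gen \<times> bool"   (* (g, True) = g^{-1} *)

definition inv_letter :: "letter \<Rightarrow> letter" where
  "inv_letter a = (fst a, \<not> snd a)"

definition cons_red :: "letter \<Rightarrow> letter list \<Rightarrow> letter list" where
  "cons_red a w = (case w of [] \<Rightarrow> [a]
      | b # w' \<Rightarrow> (if b = inv_letter a then w' else a # w))"

definition reduce :: "letter list \<Rightarrow> letter list" where
  "reduce w = foldr cons_red w []"

definition inv_word :: "letter list \<Rightarrow> letter list" where
  "inv_word w = rev (map inv_letter w)"

definition subst :: "(gen \<Rightarrow> letter list) \<Rightarrow> letter list \<Rightarrow> letter list" where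
  "subst f w = reduce (concat (map (\<lambda>a. if snd a then inv_word (f (fst a)) else f (fst a)) w))"

definition sigma :: "letter list \<Rightarrow> letter list" where
  "sigma = subst (\<lambda>g. case g of X \<Rightarrow> [(X,False),(Y,False)] | Y \<Rightarrow> [(Y,False)])"
definition sigma_inv :: "letter list \<Rightarrow> letter list" where
  "sigma_inv = subst (\<lambda>g. case g of X \<Rightarrow> [(X,False),(Y,True)] | Y \<Rightarrow> [(Y,False)])"
definition tau :: "letter list \<Rightarrow> letter list" where
  "tau = subst (\<lambda>g. case g of X \<Rightarrow> [(X,False)] | Y \<Rightarrow> [(Y,False),(X,False)])"
definition tau_inv :: "letter list \<Rightarrow> letter list" where
  "tau_inv = subst (\<lambda>g. case g of X \<Rightarrow> [(X,False)] | Y \<Rightarrow> [(Y,False),(X,True)])"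

text \<open>Chains. A list [(l_1,m_1),...,(l_k,m_k)] encodes
  tau^{m_k} sigma^{l_k} ... tau^{m_1} sigma^{l_1} (positive chain) resp.
  tau^{-m_k} sigma^{-l_k} ... tau^{-m_1} sigma^{-l_1} (negative chain).\<close>
definition chain_pos :: "(nat \<times> nat) list \<Rightarrow> letter list \<Rightarrow> letter list" where
  "chain_pos ps = fold (\<lambda>(l,m) f. (tau ^^ m) \<circ> (sigma ^^ l) \<circ> f) ps id"
definition chain_neg :: "(nat \<times> nat) list \<Rightarrow> letter list \<Rightarrow> letter list" where
  "chain_neg ps = fold (\<lambda>(l,m) f. (tau_inv ^^ m) \<circ> (sigma_inv ^^ l) \<circ> f) ps id"

definition chain_length :: "(nat \<times> nat) list \<Rightarrow> nat" where
  "chain_length ps = (\<Sum>p\<leftarrow>ps. fst p + snd p)"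

definition Lambda :: "nat \<Rightarrow> (letter list \<Rightarrow> letter list) set" where
  "Lambda m = {chain_pos ps | ps. chain_length ps \<le> m} \<union> {chain_neg ps | ps. chain_length ps \<le> m}"

definition cyc_step :: "letter list \<Rightarrow> letter list" where
  "cyc_step w = (if 2 \<le> length w \<and> hd w = inv_letter (last w) then butlast (tl w) else w)"
definition cyc_reduce :: "letter list \<Rightarrow> letter list" where
  "cyc_reduce w = (let r = reduce w in (cyc_step ^^ length r) r)"

definition cyc_len :: "letter list \<Rightarrow> nat" where
  "cyc_len w = length (cyc_reduce w)"

definition n_occ :: "letter list \<Rightarrow> gen \<Rightarrow> nat" where
  "n_occ w g = length (filter (\<lambda>a. fst a = g) (cyc_reduce w))"

end

theory Submission
  imports Defs "HOL-Library.Multiset"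
begin


lemma inv_inv[simp]: "inv_letter (inv_letter a) = a"
  by (simp add: inv_letter_def)
lemma inv_neq[simp]: "inv_letter a \<noteq> a" "a \<noteq> inv_letter a"
  by (cases a, simp add: inv_letter_def)+
lemma inv_eq_iff[simp]: "(inv_letter a = inv_letter b) = (a = b)"
  by (metis inv_inv)

fun rd :: "letter list \<Rightarrow> bool" where
  "rd [] = True" | "rd [a] = True" | "rd (a # b # w) = (b \<noteq> inv_letter a \<and> rd (b # w))"

lemma rd_Cons: "rd (a # w) = (rd w \<and> (w \<noteq> [] \<longrightarrow> hd w \<noteq> inv_letter a))"
  by (cases w) auto

lemma rd_append: "rd (xs @ ys) = (rd xs \<and> rd ys \<and> (xs \<noteq> [] \<longrightarrow> ys \<noteq> [] \<longrightarrow> hd ys \<noteq> inv_letter (last xs)))"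
  by (induction xs rule: rd.induct) (auto simp: rd_Cons)

lemma reduce_Nil[simp]: "reduce [] = []" by (simp add: reduce_def)
lemma reduce_Cons: "reduce (a # w) = cons_red a (reduce w)" by (simp add: reduce_def)

lemma rd_cons_red: "rd w \<Longrightarrow> rd (cons_red a w)"
  by (cases w) (auto simp: cons_red_def rd_Cons)

lemma rd_foldr: "rd r \<Longrightarrow> rd (foldr cons_red xs r)"
  by (induction xs) (auto simp: rd_cons_red)

lemma rd_reduce[simp]: "rd (reduce w)"
  unfolding reduce_def by (rule rd_foldr) simp

lemma cons_red_inv: "rd w \<Longrightarrow> cons_red (inv_letter a) (cons_red a w) = w"
  by (cases w) (auto simp: cons_red_def rd_Cons split: list.splits)

lemma cons_red_inv2: "rd w \<Longrightarrow> cons_red a (cons_red (inv_letter a) w) = w"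
  using cons_red_inv[of w "inv_letter a"] by simp

lemma reduce_rd: "rd w \<Longrightarrow> reduce w = w"
  by (induction w) (auto simp: reduce_Cons rd_Cons cons_red_def split: list.splits)

lemma foldr_cons_red: "rd w \<Longrightarrow> rd r \<Longrightarrow> foldr cons_red (cons_red a w) r = cons_red a (foldr cons_red w r)"
proof (cases w)
  case Nil then show ?thesis by (simp add: cons_red_def)
next
  case (Cons b w')
  assume "rd w" "rd r"
  show ?thesis
  proof (cases "b = inv_letter a")
    case True
    have "rd (foldr cons_red w' r)" using \<open>rd r\<close> by (rule rd_foldr)
    moreover have "cons_red a w = w'" using Cons True by (simp add: cons_red_def)
    ultimately show ?thesis using Cons True by (simp add: cons_red_inv2)
  next
    case False then show ?thesis using Cons by (simp add: cons_red_def)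
  qed
qed

lemma foldr_reduce: "rd r \<Longrightarrow> foldr cons_red (reduce xs) r = foldr cons_red xs r"
  by (induction xs) (simp_all add: reduce_Cons foldr_cons_red)

lemma reduce_reduce[simp]: "reduce (reduce w) = reduce w"
  by (simp add: reduce_rd)

lemma reduce_append_foldr: "reduce (xs @ ys) = foldr cons_red xs (reduce ys)"
  by (simp add: reduce_def)

lemma reduce_append_right: "reduce (xs @ ys) = reduce (xs @ reduce ys)"
  by (simp add: reduce_append_foldr)

lemma reduce_append_left: "reduce (xs @ ys) = reduce (reduce xs @ ys)"
  by (simp add: reduce_append_foldr foldr_reduce)

lemma reduce_mid: "reduce (xs @ ys @ zs) = reduce (xs @ reduce ys @ zs)"
  by (metis reduce_append_left reduce_append_right)

lemma reduce_pair: "reduce (a # inv_letter a # w) = reduce w"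
  by (simp add: reduce_Cons cons_red_inv2)

lemma reduce_pair2: "reduce (inv_letter a # a # w) = reduce w"
  using reduce_pair[of "inv_letter a"] by simp

lemma inv_word_Nil[simp]: "inv_word [] = []" by (simp add: inv_word_def)
lemma inv_word_Cons[simp]: "inv_word (a # w) = inv_word w @ [inv_letter a]" by (simp add: inv_word_def)
lemma inv_word_append[simp]: "inv_word (xs @ ys) = inv_word ys @ inv_word xs" by (simp add: inv_word_def)
lemma inv_word_inv_word[simp]: "inv_word (inv_word w) = w" by (simp add: inv_word_def rev_map comp_def)
lemma inv_word_eq_Nil[simp]: "(inv_word w = []) = (w = [])" by (simp add: inv_word_def)
lemma length_inv_word[simp]: "length (inv_word w) = length w" by (simp add: inv_word_def)

lemma reduce_cancel: "reduce (xs @ inv_word xs @ ys) = reduce ys"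
proof (induction xs arbitrary: ys)
  case Nil then show ?case by simp
next
  case (Cons a xs)
  have "reduce ((a # xs) @ inv_word (a # xs) @ ys) = reduce (a # (xs @ inv_word xs @ (inv_letter a # ys)))" by simp
  also have "\<dots> = cons_red a (reduce (inv_letter a # ys))" using Cons by (simp add: reduce_Cons)
  also have "\<dots> = reduce ys" by (simp add: reduce_Cons cons_red_inv2)
  finally show ?case .
qed

lemma reduce_cancel2: "reduce (inv_word xs @ xs @ ys) = reduce ys"
  using reduce_cancel[of "inv_word xs"] by simp

lemma reduce_pair_end: "reduce (xs @ [a, inv_letter a]) = reduce xs"
  by (metis append_Nil2 reduce_append_right reduce_pair reduce_Nil)



definition cr :: "letter list \<Rightarrow> bool" where
  "cr c = (rd c \<and> (c \<noteq> [] \<longrightarrow> hd c \<noteq> inv_letter (last c)))"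

lemma hd_inv_word: "w \<noteq> [] \<Longrightarrow> hd (inv_word w) = inv_letter (last w)"
  by (simp add: inv_word_def hd_rev last_map)
lemma last_inv_word: "w \<noteq> [] \<Longrightarrow> last (inv_word w) = inv_letter (hd w)"
  by (simp add: inv_word_def last_rev hd_map)

lemma cyc_step_cr: "cr c \<Longrightarrow> cyc_step c = c"
  by (auto simp: cyc_step_def cr_def)

lemma funpow_cr: "cr c \<Longrightarrow> (cyc_step ^^ n) c = c"
  by (induction n) (auto simp: cyc_step_cr)

lemma funpow_dec: "cr c \<Longrightarrow> length g \<le> n \<Longrightarrow> (cyc_step ^^ n) (g @ c @ inv_word g) = c"
proof (induction g arbitrary: n)
  case Nil then show ?case by (simp add: funpow_cr)
next
  case (Cons a g)
  then obtain n' where n: "n = Suc n'" "length g \<le> n'" by (cases n) auto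
  have "cyc_step ((a # g) @ c @ inv_word (a # g)) = g @ c @ inv_word g"
    by (simp add: cyc_step_def butlast_append)
  then show ?case using Cons n by (simp add: funpow_Suc_right del: funpow.simps)
qed

lemma cyc_reduce_dec: "rd (g @ c @ inv_word g) \<Longrightarrow> cr c \<Longrightarrow> cyc_reduce (g @ c @ inv_word g) = c"
  by (simp add: cyc_reduce_def reduce_rd funpow_dec)

lemma cyc_reduce_cr: "cr c \<Longrightarrow> cyc_reduce c = c"
  using cyc_reduce_dec[of "[]" c] by (simp add: cr_def)

lemma cyc_reduce_reduce[simp]: "cyc_reduce (reduce w) = cyc_reduce w"
  by (simp add: cyc_reduce_def)

lemma dec_exists: "rd r \<Longrightarrow> \<exists>g c. r = g @ c @ inv_word g \<and> cr c"
proof (induction "length r" arbitrary: r rule: less_induct)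
  case less
  show ?case
  proof (cases "cr r")
    case True then show ?thesis by (intro exI[of _ "[]"] exI[of _ r]) auto
  next
    case False
    with less.prems have ne: "r \<noteq> []" and h: "hd r = inv_letter (last r)" by (auto simp: cr_def)
    have "length r \<noteq> 1" using h by (cases r) auto
    then have tlne: "tl r \<noteq> []" using ne by (cases r) auto
    define a m b where "a = hd r" and "m = butlast (tl r)" and "b = last r"
    have r: "r = a # m @ [b]" unfolding a_def m_def b_def
      using ne tlne by (cases r) auto
    have b: "b = inv_letter a" using h r by simp
    have "rd m" using less.prems r by (simp add: rd_append rd_Cons)
    moreover have "length m < length r" using r by simp
    ultimately obtain g c where "m = g @ c @ inv_word g" "cr c" using less.hyps by blast
    then show ?thesis using r b by (intro exI[of _ "a # g"] exI[of _ c]) auto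
  qed
qed

lemma dec: obtains g where "reduce w = g @ cyc_reduce w @ inv_word g" "cr (cyc_reduce w)"
proof -
  obtain g c where d: "reduce w = g @ c @ inv_word g" "cr c" using dec_exists[OF rd_reduce] by blast
  then have "cyc_reduce w = c" using cyc_reduce_dec[of g c] rd_reduce[of w]
    by (metis cyc_reduce_reduce)
  then show ?thesis using that d by blast
qed

lemma rd_infix: "rd (xs @ ys @ zs) \<Longrightarrow> rd ys"
  by (simp add: rd_append)

lemma cr_rd: "cr c \<Longrightarrow> rd c" by (simp add: cr_def)

lemma rd_dec_Nil: assumes "rd (g @ inv_word g)" shows "g = []"
proof (rule ccontr)
  assume g: "g \<noteq> []"
  then have "hd (inv_word g) = inv_letter (last g)" by (rule hd_inv_word)
  with assms g show False by (simp add: rd_append)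
qed

lemma rd_wrap: "rd M \<Longrightarrow> M \<noteq> [] \<Longrightarrow> hd M \<noteq> inv_letter a \<Longrightarrow> last M \<noteq> a \<Longrightarrow> rd (a # M @ [inv_letter a])"
  by (simp add: rd_Cons rd_append)

lemma conj1: "mset (cyc_reduce (a # y @ [inv_letter a])) = mset (cyc_reduce y)"
proof -
  obtain g where d: "reduce y = g @ cyc_reduce y @ inv_word g" and ccr: "cr (cyc_reduce y)" by (rule dec)
  define c where "c = cyc_reduce y"
  have rdr: "rd (g @ c @ inv_word g)" using d c_def by (metis rd_reduce)
  have e: "cyc_reduce (a # y @ [inv_letter a]) = cyc_reduce (reduce ([a] @ (g @ c @ inv_word g) @ [inv_letter a]))"
    using d c_def by (metis append_Cons append_Nil cyc_reduce_reduce reduce_mid)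
  have cr: "cr c" using ccr c_def by simp
  show ?thesis
  proof (cases g)
    case (Cons b g')
    show ?thesis
    proof (cases "b = inv_letter a")
      case True
      have rdg': "rd (g' @ c @ inv_word g')"
        using rdr Cons rd_infix[of "[b]" "g' @ c @ inv_word g'" "[inv_letter b]"] by simp
      have "reduce ([a] @ (g @ c @ inv_word g) @ [inv_letter a]) = reduce (g' @ c @ inv_word g')"
        using Cons True by (simp add: reduce_pair reduce_pair_end[of "g' @ c @ inv_word g'", simplified])
      also have "reduce (g' @ c @ inv_word g') = g' @ c @ inv_word g'" using rdg' by (rule reduce_rd)
      finally show ?thesis using e cyc_reduce_dec[OF rdg' cr] c_def by simp
    next
      case False
      have "last (g @ c @ inv_word g) = inv_letter b" using Cons by (simp add: last_inv_word)
      then have "rd (a # (g @ c @ inv_word g) @ [inv_letter a])"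
        using rdr Cons False by (intro rd_wrap) auto
      then have rd2: "rd ((a # g) @ c @ inv_word (a # g))" by simp
      then have "reduce ([a] @ (g @ c @ inv_word g) @ [inv_letter a]) = (a # g) @ c @ inv_word (a # g)"
        by (simp add: reduce_rd)
      then show ?thesis using e cyc_reduce_dec[OF rd2 cr] c_def by simp
    qed
  next
    case Nil
    then have rdc: "rd c" using cr by (simp add: cr_def)
    show ?thesis
    proof (cases "c = []")
      case True
      then show ?thesis using e Nil c_def
        by (simp add: reduce_Cons cons_red_def cyc_reduce_def cyc_step_def)
    next
      case cne: False
      show ?thesis
      proof (cases "hd c = inv_letter a")
        case True
        then obtain c' where c: "c = inv_letter a # c'" using cne by (cases c) auto
        have rd': "rd (c' @ [inv_letter a])" using cr c
          by (cases "c' = []") (auto simp: cr_def rd_append rd_Cons)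
        have cr': "cr (c' @ [inv_letter a])" using rd' cr c
          by (cases c') (auto simp: cr_def rd_append rd_Cons)
        have "reduce ([a] @ (g @ c @ inv_word g) @ [inv_letter a]) = c' @ [inv_letter a]"
          using Nil c rd' by (simp add: reduce_pair reduce_rd)
        then show ?thesis using e cyc_reduce_cr[OF cr'] c c_def by simp
      next
        case hne: False
        show ?thesis
        proof (cases "last c = a")
          case True
          then obtain c'' where c: "c = c'' @ [a]" using cne by (metis append_butlast_last_id)
          have rd': "rd (a # c'')" using cr c hne
            by (cases "c'' = []") (auto simp: cr_def rd_append rd_Cons)
          have cr': "cr (a # c'')" using rd' cr c
            by (cases "c'' = []") (auto simp: cr_def rd_append rd_Cons)
          have "reduce ([a] @ (g @ c @ inv_word g) @ [inv_letter a]) = reduce (a # c'')"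
            using Nil c reduce_pair_end[of "a # c''" a] by simp
          also have "\<dots> = a # c''" using rd' by (simp add: reduce_rd)
          finally show ?thesis using e cyc_reduce_cr[OF cr'] c c_def by simp
        next
          case False
          have "rd (a # c @ [inv_letter a])" using rdc hne False cne by (intro rd_wrap) auto
          then have rd2: "rd ([a] @ c @ inv_word [a])" by simp
          then have "reduce ([a] @ (g @ c @ inv_word g) @ [inv_letter a]) = [a] @ c @ inv_word [a]"
            using Nil by (simp add: reduce_rd)
          then show ?thesis using e cyc_reduce_dec[OF rd2 cr] c_def by simp
        qed
      qed
    qed
  qed
qed

lemma conj: "mset (cyc_reduce (h @ z @ inv_word h)) = mset (cyc_reduce z)"
proof (induction h)
  case Nil then show ?case by simp
next
  case (Cons a h)
  have "(a # h) @ z @ inv_word (a # h) = a # (h @ z @ inv_word h) @ [inv_letter a]" by simp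
  then show ?case using conj1 Cons by metis
qed

lemma square: "mset (reduce (z @ z)) = mset (reduce z) + mset (cyc_reduce z)"
proof -
  obtain g where d: "reduce z = g @ cyc_reduce z @ inv_word g" and cr: "cr (cyc_reduce z)" by (rule dec)
  define c where "c = cyc_reduce z"
  have rdr: "rd (g @ c @ inv_word g)" using d c_def by (metis rd_reduce)
  have "reduce (z @ z) = reduce (reduce z @ reduce z)"
    by (metis reduce_append_left reduce_append_right)
  also have "\<dots> = reduce (g @ c @ (inv_word g @ g @ c @ inv_word g))" using d c_def by simp
  also have "\<dots> = reduce (g @ c @ reduce (inv_word g @ g @ c @ inv_word g))"
    by (metis append.assoc reduce_append_right)
  also have "\<dots> = reduce (g @ c @ c @ inv_word g)"
    by (metis append.assoc reduce_append_right reduce_cancel2)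
  finally have e: "reduce (z @ z) = reduce (g @ c @ c @ inv_word g)" .
  show ?thesis
  proof (cases "c = []")
    case True
    then have "g = []" using rdr rd_dec_Nil by simp
    then show ?thesis using e d True c_def by simp
  next
    case False
    have "rd (g @ c @ c @ inv_word g)" using rdr cr False c_def
      by (auto simp: rd_append cr_def)
    then show ?thesis using e d c_def by (simp add: reduce_rd)
  qed
qed



definition img :: "(gen \<Rightarrow> letter list) \<Rightarrow> letter \<Rightarrow> letter list" where
  "img f = (\<lambda>a. if snd a then inv_word (f (fst a)) else f (fst a))"

definition Fm :: "(gen \<Rightarrow> letter list) \<Rightarrow> letter list \<Rightarrow> letter list" where
  "Fm f w = concat (map (img f) w)"

lemma subst_Fm: "subst f w = reduce (Fm f w)"
  by (simp add: subst_def Fm_def img_def)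

lemma Fm_Nil[simp]: "Fm f [] = []" by (simp add: Fm_def)
lemma Fm_Cons[simp]: "Fm f (a # w) = img f a @ Fm f w" by (simp add: Fm_def)
lemma Fm_append[simp]: "Fm f (xs @ ys) = Fm f xs @ Fm f ys" by (simp add: Fm_def)

lemma img_inv: "img f (inv_letter a) = inv_word (img f a)"
  by (simp add: img_def inv_letter_def)

lemma Fm_inv: "Fm f (inv_word w) = inv_word (Fm f w)"
  by (induction w) (simp_all add: img_inv)

lemma reduce_Fm_cons_red: "reduce (Fm f (a # r)) = reduce (Fm f (cons_red a r))"
proof (cases r)
  case Nil then show ?thesis by (simp add: cons_red_def)
next
  case (Cons b r')
  show ?thesis
  proof (cases "b = inv_letter a")
    case True
    then show ?thesis using Cons by (simp add: cons_red_def img_inv reduce_cancel)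
  next
    case False then show ?thesis using Cons by (simp add: cons_red_def)
  qed
qed

lemma reduce_Fm: "reduce (Fm f w) = reduce (Fm f (reduce w))"
proof (induction w)
  case Nil then show ?case by simp
next
  case (Cons a w)
  have "reduce (Fm f (a # w)) = reduce (img f a @ reduce (Fm f w))"
    by (metis Fm_Cons reduce_append_right)
  also have "\<dots> = reduce (img f a @ Fm f (reduce w))"
    using Cons by (metis reduce_append_right)
  also have "\<dots> = reduce (Fm f (a # reduce w))" by simp
  also have "\<dots> = reduce (Fm f (reduce (a # w)))" 
    using reduce_Fm_cons_red[of f a "reduce w"] by (simp only: reduce_Cons)
  finally show ?case .
qed

lemma mset_subst: "mset (cyc_reduce (subst f w)) = mset (cyc_reduce (Fm f (cyc_reduce w)))"
proof -
  obtain g where d: "reduce w = g @ cyc_reduce w @ inv_word g" by (rule dec)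
  have "cyc_reduce (subst f w) = cyc_reduce (Fm f w)" by (simp add: subst_Fm)
  also have "\<dots> = cyc_reduce (reduce (Fm f (reduce w)))"
    by (metis cyc_reduce_reduce reduce_Fm)
  also have "\<dots> = cyc_reduce (Fm f g @ Fm f (cyc_reduce w) @ inv_word (Fm f g))"
    using d by (simp add: Fm_inv)
  finally show ?thesis using conj by simp
qed



lemma inv_letter_simp[simp]: "inv_letter (g, s) = (g, \<not> s)" by (simp add: inv_letter_def)

lemma cons_red_cancel[simp]: "rd R \<Longrightarrow> b = inv_letter a \<Longrightarrow> cons_red a (cons_red b R) = R"
  using cons_red_inv2 by blast

declare rd_cons_red[simp]

fun pc :: "(letter \<Rightarrow> letter \<Rightarrow> bool) \<Rightarrow> letter list \<Rightarrow> nat" where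
  "pc cf (a # b # w) = (if cf a b then 1 else 0) + pc cf (b # w)"
| "pc cf _ = 0"

lemma pc_Cons: "pc cf (a # w) = (case w of [] \<Rightarrow> 0 | b # _ \<Rightarrow> (if cf a b then 1 else 0)) + pc cf w"
  by (cases w) auto

lemma pc_append: "xs \<noteq> [] \<Longrightarrow> ys \<noteq> [] \<Longrightarrow> pc cf (xs @ ys) = pc cf xs + pc cf ys + (if cf (last xs) (hd ys) then 1 else 0)"
proof (induction xs)
  case Nil then show ?case by simp
next
  case (Cons a xs)
  then show ?case by (cases xs; cases ys) (auto simp: pc_Cons)
qed

lemma pc_Cons_no: "\<forall>b. \<not> cf a b \<Longrightarrow> pc cf (a # w) = pc cf w"
  by (cases w) auto

definition cnt :: "gen \<Rightarrow> letter list \<Rightarrow> nat" where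
  "cnt g w = length (filter (\<lambda>a. fst a = g) w)"

lemma cnt_simps[simp]: "cnt g [] = 0" "cnt g (a # w) = (if fst a = g then 1 else 0) + cnt g w"
  "cnt g (xs @ ys) = cnt g xs + cnt g ys"
  by (simp_all add: cnt_def)

lemma letter_cases: "a = (X,False) \<or> a = (X,True) \<or> a = (Y,False) \<or> a = (Y,True)"
  by (cases a) (metis (full_types) gen.exhaust)

lemma gen_neq: "((g::gen) \<noteq> X) = (g = Y)" "((g::gen) \<noteq> Y) = (g = X)"
  by (cases g; simp)+

definition fs :: "gen \<Rightarrow> letter list" where
  "fs = (\<lambda>g. case g of X \<Rightarrow> [(X,False),(Y,False)] | Y \<Rightarrow> [(Y,False)])"

fun Gs :: "letter list \<Rightarrow> letter list" where
  "Gs [] = []"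
| "Gs ((X,False) # (Y,True) # w) = (X,False) # Gs w"
| "Gs ((X,False) # w) = (X,False) # (Y,False) # Gs w"
| "Gs ((Y,False) # (X,True) # w) = (X,True) # Gs w"
| "Gs ((X,True) # w) = (Y,True) # (X,True) # Gs w"
| "Gs ((Y,False) # w) = (Y,False) # Gs w"
| "Gs ((Y,True) # w) = (Y,True) # Gs w"

lemma Gs_red: "reduce (Fm fs w) = reduce (Gs w)"
  by (induction w rule: Gs.induct) (simp_all add: reduce_Cons fs_def img_def inv_word_def)

definition HGs :: "letter \<Rightarrow> letter set" where
  "HGs a = (if a = (X,False) then {(X,False)} else if a = (X,True) then {(Y,True)}
     else if a = (Y,False) then {(Y,False),(X,True)} else {(Y,True)})"

lemma Gs_Nil_iff: "(Gs w = []) = (w = [])"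
  by (induction w rule: Gs.induct) auto

lemma Gs_rd: "rd w \<Longrightarrow> rd (Gs w) \<and> (w \<noteq> [] \<longrightarrow> hd (Gs w) \<in> HGs (hd w))"
  by (induction w rule: Gs.induct) (auto simp: rd_Cons Gs_Nil_iff HGs_def gen_neq split: if_splits)

definition cfs :: "letter \<Rightarrow> letter \<Rightarrow> bool" where
  "cfs a b = ((a = (X,False) \<and> b = (Y,True)) \<or> (a = (Y,False) \<and> b = (X,True)))"

lemma Gs_len: "length (Gs w) + 2 * pc cfs w = 2 * cnt X w + cnt Y w"
  apply (induction w rule: Gs.induct) apply (simp_all add: cfs_def pc_Cons_no)
  done

lemma Gs_cnt: "cnt X (Gs w) = cnt X w"
  by (induction w rule: Gs.induct) auto

definition fsi :: "gen \<Rightarrow> letter list" where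
  "fsi = (\<lambda>g. case g of X \<Rightarrow> [(X,False),(Y,True)] | Y \<Rightarrow> [(Y,False)])"

fun Gsi :: "letter list \<Rightarrow> letter list" where
  "Gsi [] = []"
| "Gsi ((X,False) # (Y,False) # w) = (X,False) # Gsi w"
| "Gsi ((X,False) # w) = (X,False) # (Y,True) # Gsi w"
| "Gsi ((Y,True) # (X,True) # w) = (X,True) # Gsi w"
| "Gsi ((X,True) # w) = (Y,False) # (X,True) # Gsi w"
| "Gsi ((Y,False) # w) = (Y,False) # Gsi w"
| "Gsi ((Y,True) # w) = (Y,True) # Gsi w"

lemma Gsi_red: "reduce (Fm fsi w) = reduce (Gsi w)"
  by (induction w rule: Gsi.induct) (simp_all add: reduce_Cons fsi_def img_def inv_word_def)

definition HGsi :: "letter \<Rightarrow> letter set" where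
  "HGsi a = (if a = (X,False) then {(X,False)} else if a = (X,True) then {(Y,False)}
     else if a = (Y,False) then {(Y,False)} else {(Y,True),(X,True)})"

lemma Gsi_Nil_iff: "(Gsi w = []) = (w = [])"
  by (induction w rule: Gsi.induct) auto

lemma Gsi_rd: "rd w \<Longrightarrow> rd (Gsi w) \<and> (w \<noteq> [] \<longrightarrow> hd (Gsi w) \<in> HGsi (hd w))"
  apply (induction w rule: Gsi.induct) apply (auto simp: rd_Cons Gsi_Nil_iff HGsi_def gen_neq split: if_splits)
  apply (metis letter_cases)+
  done

definition cfsi :: "letter \<Rightarrow> letter \<Rightarrow> bool" where
  "cfsi a b = ((a = (X,False) \<and> b = (Y,False)) \<or> (a = (Y,True) \<and> b = (X,True)))"

lemma Gsi_len: "length (Gsi w) + 2 * pc cfsi w = 2 * cnt X w + cnt Y w"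
  apply (induction w rule: Gsi.induct) apply (simp_all add: cfsi_def pc_Cons_no)
  done

lemma Gsi_cnt: "cnt X (Gsi w) = cnt X w"
  by (induction w rule: Gsi.induct) auto

definition ft :: "gen \<Rightarrow> letter list" where
  "ft = (\<lambda>g. case g of X \<Rightarrow> [(X,False)] | Y \<Rightarrow> [(Y,False),(X,False)])"

fun Gt :: "letter list \<Rightarrow> letter list" where
  "Gt [] = []"
| "Gt ((Y,False) # (X,True) # w) = (Y,False) # Gt w"
| "Gt ((Y,False) # w) = (Y,False) # (X,False) # Gt w"
| "Gt ((X,False) # (Y,True) # w) = (Y,True) # Gt w"
| "Gt ((Y,True) # w) = (X,True) # (Y,True) # Gt w"
| "Gt ((X,False) # w) = (X,False) # Gt w"
| "Gt ((X,True) # w) = (X,True) # Gt w"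

lemma Gt_red: "reduce (Fm ft w) = reduce (Gt w)"
  by (induction w rule: Gt.induct) (simp_all add: reduce_Cons ft_def img_def inv_word_def)

definition HGt :: "letter \<Rightarrow> letter set" where
  "HGt a = (if a = (X,False) then {(X,False),(Y,True)} else if a = (X,True) then {(X,True)}
     else if a = (Y,False) then {(Y,False)} else {(X,True)})"

lemma Gt_Nil_iff: "(Gt w = []) = (w = [])"
  by (induction w rule: Gt.induct) auto

lemma Gt_rd: "rd w \<Longrightarrow> rd (Gt w) \<and> (w \<noteq> [] \<longrightarrow> hd (Gt w) \<in> HGt (hd w))"
  by (induction w rule: Gt.induct) (auto simp: rd_Cons Gt_Nil_iff HGt_def gen_neq split: if_splits)

definition cft :: "letter \<Rightarrow> letter \<Rightarrow> bool" where
  "cft a b = ((a = (Y,False) \<and> b = (X,True)) \<or> (a = (X,False) \<and> b = (Y,True)))"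

lemma Gt_len: "length (Gt w) + 2 * pc cft w = cnt X w + 2 * cnt Y w"
  apply (induction w rule: Gt.induct) apply (simp_all add: cft_def pc_Cons_no)
  done

lemma Gt_cnt: "cnt Y (Gt w) = cnt Y w"
  by (induction w rule: Gt.induct) auto

definition fti :: "gen \<Rightarrow> letter list" where
  "fti = (\<lambda>g. case g of X \<Rightarrow> [(X,False)] | Y \<Rightarrow> [(Y,False),(X,True)])"

fun Gti :: "letter list \<Rightarrow> letter list" where
  "Gti [] = []"
| "Gti ((Y,False) # (X,False) # w) = (Y,False) # Gti w"
| "Gti ((Y,False) # w) = (Y,False) # (X,True) # Gti w"
| "Gti ((X,True) # (Y,True) # w) = (Y,True) # Gti w"
| "Gti ((Y,True) # w) = (X,False) # (Y,True) # Gti w"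
| "Gti ((X,False) # w) = (X,False) # Gti w"
| "Gti ((X,True) # w) = (X,True) # Gti w"

lemma Gti_red: "reduce (Fm fti w) = reduce (Gti w)"
  by (induction w rule: Gti.induct) (simp_all add: reduce_Cons fti_def img_def inv_word_def)

definition HGti :: "letter \<Rightarrow> letter set" where
  "HGti a = (if a = (X,False) then {(X,False)} else if a = (X,True) then {(X,True),(Y,True)}
     else if a = (Y,False) then {(Y,False)} else {(X,False)})"

lemma Gti_Nil_iff: "(Gti w = []) = (w = [])"
  by (induction w rule: Gti.induct) auto

lemma Gti_rd: "rd w \<Longrightarrow> rd (Gti w) \<and> (w \<noteq> [] \<longrightarrow> hd (Gti w) \<in> HGti (hd w))"
  by (induction w rule: Gti.induct) (auto simp: rd_Cons Gti_Nil_iff HGti_def gen_neq split: if_splits)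

definition cfti :: "letter \<Rightarrow> letter \<Rightarrow> bool" where
  "cfti a b = ((a = (Y,False) \<and> b = (X,False)) \<or> (a = (X,True) \<and> b = (Y,True)))"

lemma Gti_len: "length (Gti w) + 2 * pc cfti w = cnt X w + 2 * cnt Y w"
  apply (induction w rule: Gti.induct) apply (simp_all add: cfti_def pc_Cons_no)
  done

lemma Gti_cnt: "cnt Y (Gti w) = cnt Y w"
  by (induction w rule: Gti.induct) auto



lemma cnt_mset: "cnt g w = size (filter_mset (\<lambda>a. fst a = g) (mset w))"
  by (simp add: cnt_def flip: mset_filter)

lemma cr_rd_cc: "cr c \<Longrightarrow> rd (c @ c)"
  by (auto simp: cr_def rd_append)

lemma square_G:
  assumes red: "\<And>w. reduce (Fm f w) = reduce (G w)" and rdG: "\<And>w. rd w \<Longrightarrow> rd (G w)" and cr: "cr c"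
  shows "mset (G (c @ c)) = mset (G c) + mset (cyc_reduce (Fm f c))"
proof -
  have "reduce (Fm f c @ Fm f c) = G (c @ c)"
    using red[of "c @ c"] rdG[OF cr_rd_cc[OF cr]] by (simp add: reduce_rd)
  moreover have "reduce (Fm f c) = G c" using red[of c] rdG[OF cr_rd[OF cr]] by (simp add: reduce_rd)
  ultimately show ?thesis using square[of "Fm f c"] by simp
qed

lemma square_len:
  assumes "\<And>w. reduce (Fm f w) = reduce (G w)" "\<And>w. rd w \<Longrightarrow> rd (G w)" "cr c"
  shows "length (G (c @ c)) = length (G c) + length (cyc_reduce (Fm f c))"
  using arg_cong[OF square_G[OF assms], of size] by simp

lemma square_cnt:
  assumes "\<And>w. reduce (Fm f w) = reduce (G w)" "\<And>w. rd w \<Longrightarrow> rd (G w)" "cr c"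
  shows "cnt g (G (c @ c)) = cnt g (G c) + cnt g (cyc_reduce (Fm f c))"
  using arg_cong[OF square_G[OF assms], of "\<lambda>M. size (filter_mset (\<lambda>a. fst a = g) M)"]
  by (simp add: cnt_mset)

lemma subst_len: "cyc_len (subst f w) = length (cyc_reduce (Fm f (cyc_reduce w)))"
  using arg_cong[OF mset_subst[of f w], of size] by (simp add: cyc_len_def)

lemma subst_cnt: "n_occ (subst f w) g = cnt g (cyc_reduce (Fm f (cyc_reduce w)))"
  using arg_cong[OF mset_subst[of f w], of "\<lambda>M. size (filter_mset (\<lambda>a. fst a = g) M)"]
  by (simp add: n_occ_def cnt_def flip: mset_filter)

lemma sigma_eq: "sigma = subst fs" by (simp add: sigma_def fs_def)
lemma sigma_inv_eq: "sigma_inv = subst fsi" by (simp add: sigma_inv_def fsi_def)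
lemma tau_eq: "tau = subst ft" by (simp add: tau_def ft_def)
lemma tau_inv_eq: "tau_inv = subst fti" by (simp add: tau_inv_def fti_def)

lemma cr_cyc: "cr (cyc_reduce w)"
  by (rule dec) auto

lemma n_occ_cnt: "n_occ w g = cnt g (cyc_reduce w)" by (simp add: n_occ_def cnt_def)

lemma cnt_sum: "cnt X w + cnt Y w = length w"
  by (induction w) (auto simp: gen_neq)

lemma n_occ_sum: "n_occ w X + n_occ w Y = cyc_len w"
  by (simp add: n_occ_cnt cyc_len_def cnt_sum)

lemma rdGs: "rd w \<Longrightarrow> rd (Gs w)" using Gs_rd by blast
lemma rdGsi: "rd w \<Longrightarrow> rd (Gsi w)" using Gsi_rd by blast
lemma rdGt: "rd w \<Longrightarrow> rd (Gt w)" using Gt_rd by blast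
lemma rdGti: "rd w \<Longrightarrow> rd (Gti w)" using Gti_rd by blast

lemma sigma_X: "n_occ (sigma w) X = n_occ w X"
proof -
  define c where "c = cyc_reduce w"
  have "cnt X (Gs (c @ c)) = cnt X (Gs c) + cnt X (cyc_reduce (Fm fs c))"
    using square_cnt[OF Gs_red rdGs cr_cyc] c_def by blast
  then show ?thesis using subst_cnt[of fs w X] by (simp add: sigma_eq n_occ_cnt Gs_cnt c_def)
qed

lemma sigma_inv_X: "n_occ (sigma_inv w) X = n_occ w X"
proof -
  define c where "c = cyc_reduce w"
  have "cnt X (Gsi (c @ c)) = cnt X (Gsi c) + cnt X (cyc_reduce (Fm fsi c))"
    using square_cnt[OF Gsi_red rdGsi cr_cyc] c_def by blast
  then show ?thesis using subst_cnt[of fsi w X] by (simp add: sigma_inv_eq n_occ_cnt Gsi_cnt c_def)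
qed

lemma tau_Y: "n_occ (tau w) Y = n_occ w Y"
proof -
  define c where "c = cyc_reduce w"
  have "cnt Y (Gt (c @ c)) = cnt Y (Gt c) + cnt Y (cyc_reduce (Fm ft c))"
    using square_cnt[OF Gt_red rdGt cr_cyc] c_def by blast
  then show ?thesis using subst_cnt[of ft w Y] by (simp add: tau_eq n_occ_cnt Gt_cnt c_def)
qed

lemma tau_inv_Y: "n_occ (tau_inv w) Y = n_occ w Y"
proof -
  define c where "c = cyc_reduce w"
  have "cnt Y (Gti (c @ c)) = cnt Y (Gti c) + cnt Y (cyc_reduce (Fm fti c))"
    using square_cnt[OF Gti_red rdGti cr_cyc] c_def by blast
  then show ?thesis using subst_cnt[of fti w Y] by (simp add: tau_inv_eq n_occ_cnt Gti_cnt c_def)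
qed

definition Pp :: "letter \<Rightarrow> int" where
  "Pp a = (if a = (Y,False) \<or> a = (X,True) then 1 else 0)"

lemma loc: "b \<noteq> inv_letter a \<Longrightarrow>
  (if cfsi a b then 1 else 0) + Pp a = (if cfti a b then 1 else 0) + Pp b"
  using letter_cases[of a] letter_cases[of b] by (auto simp: cfsi_def cfti_def Pp_def)

lemma pot: "rd w \<Longrightarrow> w \<noteq> [] \<Longrightarrow> int (pc cfsi w) + Pp (hd w) = int (pc cfti w) + Pp (last w)"
proof (induction w rule: rd.induct)
  case (3 a b w)
  then have "b \<noteq> inv_letter a" "rd (b # w)" by auto
  with 3 loc[of b a] show ?case by (auto split: if_splits)
qed auto

lemma cfs_cft: "cfs = cft" by (auto simp: cfs_def cft_def fun_eq_iff)

lemma Gs_len': "length (Gs w) + 2 * pc cfs w = 2 * cnt X w + 1 * cnt Y w" using Gs_len[of w] by simp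
lemma Gsi_len': "length (Gsi w) + 2 * pc cfsi w = 2 * cnt X w + 1 * cnt Y w" using Gsi_len[of w] by simp
lemma Gt_len': "length (Gt w) + 2 * pc cft w = 1 * cnt X w + 2 * cnt Y w" using Gt_len[of w] by simp
lemma Gti_len': "length (Gti w) + 2 * pc cfti w = 1 * cnt X w + 2 * cnt Y w" using Gti_len[of w] by simp

lemma len_formula:
  assumes red: "\<And>w. reduce (Fm f w) = reduce (G w)" and rdG: "\<And>w. rd w \<Longrightarrow> rd (G w)"
    and cr: "cr c" and ne: "c \<noteq> []"
    and lenG: "\<And>w. length (G w) + 2 * pc cf w = a * cnt X w + b * cnt Y w"
  shows "length (cyc_reduce (Fm f c)) + 2 * pc cf c + 2 * (if cf (last c) (hd c) then 1 else 0)
     = a * cnt X c + b * cnt Y c"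
proof -
  have 1: "length (G (c @ c)) = length (G c) + length (cyc_reduce (Fm f c))"
    by (rule square_len[OF red rdG cr])
  have 2: "pc cf (c @ c) = pc cf c + pc cf c + (if cf (last c) (hd c) then 1 else 0)"
    using pc_append[OF ne ne] by simp
  have 3: "length (G (c @ c)) + 2 * pc cf (c @ c) = a * cnt X (c @ c) + b * cnt Y (c @ c)" by (rule lenG)
  have 4: "length (G c) + 2 * pc cf c = a * cnt X c + b * cnt Y c" by (rule lenG)
  from 1 2 3 4 show ?thesis by (simp add: algebra_simps)
qed

lemma key: "int (cyc_len (sigma w)) + int (cyc_len (sigma_inv w)) - int (cyc_len (tau w)) - int (cyc_len (tau_inv w))
   = 2 * (int (n_occ w X) - int (n_occ w Y))"
proof -
  define c where "c = cyc_reduce w"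
  have cr: "cr c" using cr_cyc c_def by simp
  show ?thesis
  proof (cases "c = []")
    case True
    then show ?thesis using c_def
      by (simp add: sigma_eq sigma_inv_eq tau_eq tau_inv_eq subst_len n_occ_cnt cyc_reduce_def cyc_step_def)
  next
    case False
    have s: "length (cyc_reduce (Fm fs c)) + 2 * pc cfs c + 2 * (if cfs (last c) (hd c) then 1 else 0)
      = 2 * cnt X c + 1 * cnt Y c"
      by (rule len_formula[OF Gs_red rdGs cr False Gs_len'])
    have si: "length (cyc_reduce (Fm fsi c)) + 2 * pc cfsi c + 2 * (if cfsi (last c) (hd c) then 1 else 0)
      = 2 * cnt X c + 1 * cnt Y c"
      by (rule len_formula[OF Gsi_red rdGsi cr False Gsi_len'])
    have t: "length (cyc_reduce (Fm ft c)) + 2 * pc cft c + 2 * (if cft (last c) (hd c) then 1 else 0)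
      = 1 * cnt X c + 2 * cnt Y c"
      by (rule len_formula[OF Gt_red rdGt cr False Gt_len'])
    have ti: "length (cyc_reduce (Fm fti c)) + 2 * pc cfti c + 2 * (if cfti (last c) (hd c) then 1 else 0)
      = 1 * cnt X c + 2 * cnt Y c"
      by (rule len_formula[OF Gti_red rdGti cr False Gti_len'])
    have p: "int (pc cfsi c) + Pp (hd c) = int (pc cfti c) + Pp (last c)"
      using pot[of c] cr False by (simp add: cr_def)
    have l: "(if cfsi (last c) (hd c) then 1 else 0) + Pp (last c) = (if cfti (last c) (hd c) then 1 else 0) + Pp (hd c)"
      using loc[of "hd c" "last c"] cr False by (simp add: cr_def)
    have e: "cyc_len (sigma w) = length (cyc_reduce (Fm fs c))" "cyc_len (sigma_inv w) = length (cyc_reduce (Fm fsi c))"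
      "cyc_len (tau w) = length (cyc_reduce (Fm ft c))" "cyc_len (tau_inv w) = length (cyc_reduce (Fm fti c))"
      "n_occ w X = cnt X c" "n_occ w Y = cnt Y c"
      by (simp_all add: sigma_eq sigma_inv_eq tau_eq tau_inv_eq subst_len n_occ_cnt c_def)
    show ?thesis unfolding e using s si t ti p l cfs_cft
      by (simp split: if_splits)
  qed
qed



lemma chain_pos_snoc: "chain_pos (ps @ [(l, k)]) = (tau ^^ k) \<circ> (sigma ^^ l) \<circ> chain_pos ps"
  by (simp add: chain_pos_def)
lemma chain_neg_snoc: "chain_neg (ps @ [(l, k)]) = (tau_inv ^^ k) \<circ> (sigma_inv ^^ l) \<circ> chain_neg ps"
  by (simp add: chain_neg_def)
lemma chain_length_snoc: "chain_length (ps @ [(l, k)]) = chain_length ps + l + k"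
  by (simp add: chain_length_def)
lemma chain_pos_Nil: "chain_pos [] = id" by (simp add: chain_pos_def)
lemma chain_neg_Nil: "chain_neg [] = id" by (simp add: chain_neg_def)

lemma pos_in: "chain_length ps \<le> m \<Longrightarrow> chain_pos ps \<in> Lambda m"
  by (auto simp: Lambda_def)
lemma neg_in: "chain_length ps \<le> m \<Longrightarrow> chain_neg ps \<in> Lambda m"
  by (auto simp: Lambda_def)

locale setting =
  fixes u v :: "letter list" and m :: nat
  assumes m: "0 < m"
    and H: "\<forall>\<psi>\<in>Lambda m. cyc_len (\<psi> u) = cyc_len (\<psi> v)"
begin

definition good :: "(letter list \<Rightarrow> letter list) \<Rightarrow> bool" where
  "good \<psi> = (n_occ (\<psi> u) X = n_occ (\<psi> v) X \<and> n_occ (\<psi> u) Y = n_occ (\<psi> v) Y)"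

lemma Hl: "\<psi> \<in> Lambda m \<Longrightarrow> cyc_len (\<psi> u) = cyc_len (\<psi> v)" using H by blast

lemma good_id: "good id"
proof -
  have c1: "chain_length [(1,0)] \<le> m" "chain_length [(0,1)] \<le> m" "chain_length [] \<le> m"
    using m by (simp_all add: chain_length_def)
  have "chain_pos [(1,0)] = sigma" "chain_pos [(0,1)] = tau"
    "chain_neg [(1,0)] = sigma_inv" "chain_neg [(0,1)] = tau_inv"
    by (simp_all add: chain_pos_def chain_neg_def)
  then have mem: "sigma \<in> Lambda m" "tau \<in> Lambda m" "sigma_inv \<in> Lambda m" "tau_inv \<in> Lambda m"
    "id \<in> Lambda m"
    using pos_in[OF c1(1)] pos_in[OF c1(2)] neg_in[OF c1(1)] neg_in[OF c1(2)] pos_in[OF c1(3)]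
    by (simp_all add: chain_pos_Nil)
  then have e: "cyc_len (sigma u) = cyc_len (sigma v)" "cyc_len (tau u) = cyc_len (tau v)"
    "cyc_len (sigma_inv u) = cyc_len (sigma_inv v)" "cyc_len (tau_inv u) = cyc_len (tau_inv v)"
    "cyc_len u = cyc_len v"
    using Hl[OF mem(1)] Hl[OF mem(2)] Hl[OF mem(3)] Hl[OF mem(4)] Hl[OF mem(5)] by simp_all
  have "2 * (int (n_occ u X) - int (n_occ u Y)) = 2 * (int (n_occ v X) - int (n_occ v Y))"
    using key[of u] key[of v] e by simp
  moreover have "n_occ u X + n_occ u Y = n_occ v X + n_occ v Y"
    using n_occ_sum[of u] n_occ_sum[of v] e by simp
  ultimately show ?thesis unfolding good_def by simp
qed

lemma step_X:
  assumes "good \<phi>" "cyc_len (f (\<phi> u)) = cyc_len (f (\<phi> v))" "\<And>w. n_occ (f w) X = n_occ w X"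
  shows "good (f \<circ> \<phi>)"
  using assms n_occ_sum[of "f (\<phi> u)"] n_occ_sum[of "f (\<phi> v)"] unfolding good_def by simp

lemma step_Y:
  assumes "good \<phi>" "cyc_len (f (\<phi> u)) = cyc_len (f (\<phi> v))" "\<And>w. n_occ (f w) Y = n_occ w Y"
  shows "good (f \<circ> \<phi>)"
  using assms n_occ_sum[of "f (\<phi> u)"] n_occ_sum[of "f (\<phi> v)"] unfolding good_def by simp

lemma pos_good: "chain_length ps \<le> m \<Longrightarrow> good (chain_pos ps)"
proof (induction ps rule: rev_induct)
  case Nil then show ?case using good_id by (metis chain_pos_Nil)
next
  case (snoc p ps)
  obtain l k where p: "p = (l, k)" by (cases p)
  have len: "chain_length ps + l + k \<le> m" using snoc.prems p by (simp add: chain_length_snoc)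
  define \<phi> where "\<phi> = chain_pos ps"
  have g0: "good \<phi>" using snoc len \<phi>_def by simp
  have A: "j \<le> l \<Longrightarrow> good ((sigma ^^ j) \<circ> \<phi>)" for j
  proof (induction j)
    case 0 then show ?case using g0 by simp
  next
    case (Suc j)
    have mem: "chain_pos (ps @ [(Suc j, 0)]) \<in> Lambda m"
      using Suc.prems len by (intro pos_in) (simp add: chain_length_snoc)
    have "cyc_len (sigma (((sigma ^^ j) \<circ> \<phi>) u)) = cyc_len (sigma (((sigma ^^ j) \<circ> \<phi>) v))"
      using Hl[OF mem] \<phi>_def by (simp add: chain_pos_snoc)
    from step_X[OF Suc.IH[OF Suc_leD[OF Suc.prems]] this sigma_X]
    show ?case by (simp add: comp_def)
  qed
  have B: "i \<le> k \<Longrightarrow> good ((tau ^^ i) \<circ> (sigma ^^ l) \<circ> \<phi>)" for i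
  proof (induction i)
    case 0 then show ?case using A[of l] by (simp add: comp_def)
  next
    case (Suc i)
    have mem: "chain_pos (ps @ [(l, Suc i)]) \<in> Lambda m"
      using Suc.prems len by (intro pos_in) (simp add: chain_length_snoc)
    have "cyc_len (tau (((tau ^^ i) \<circ> (sigma ^^ l) \<circ> \<phi>) u)) = cyc_len (tau (((tau ^^ i) \<circ> (sigma ^^ l) \<circ> \<phi>) v))"
      using Hl[OF mem] \<phi>_def by (simp add: chain_pos_snoc)
    from step_Y[OF Suc.IH[OF Suc_leD[OF Suc.prems]] this tau_Y]
    show ?case by (simp add: comp_def)
  qed
  show ?case using B[of k] p \<phi>_def by (simp add: chain_pos_snoc comp_def)
qed

lemma neg_good: "chain_length ps \<le> m \<Longrightarrow> good (chain_neg ps)"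
proof (induction ps rule: rev_induct)
  case Nil then show ?case using good_id by (metis chain_neg_Nil)
next
  case (snoc p ps)
  obtain l k where p: "p = (l, k)" by (cases p)
  have len: "chain_length ps + l + k \<le> m" using snoc.prems p by (simp add: chain_length_snoc)
  define \<phi> where "\<phi> = chain_neg ps"
  have g0: "good \<phi>" using snoc len \<phi>_def by simp
  have A: "j \<le> l \<Longrightarrow> good ((sigma_inv ^^ j) \<circ> \<phi>)" for j
  proof (induction j)
    case 0 then show ?case using g0 by simp
  next
    case (Suc j)
    have mem: "chain_neg (ps @ [(Suc j, 0)]) \<in> Lambda m"
      using Suc.prems len by (intro neg_in) (simp add: chain_length_snoc)
    have "cyc_len (sigma_inv (((sigma_inv ^^ j) \<circ> \<phi>) u)) = cyc_len (sigma_inv (((sigma_inv ^^ j) \<circ> \<phi>) v))"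
      using Hl[OF mem] \<phi>_def by (simp add: chain_neg_snoc)
    from step_X[OF Suc.IH[OF Suc_leD[OF Suc.prems]] this sigma_inv_X]
    show ?case by (simp add: comp_def)
  qed
  have B: "i \<le> k \<Longrightarrow> good ((tau_inv ^^ i) \<circ> (sigma_inv ^^ l) \<circ> \<phi>)" for i
  proof (induction i)
    case 0 then show ?case using A[of l] by (simp add: comp_def)
  next
    case (Suc i)
    have mem: "chain_neg (ps @ [(l, Suc i)]) \<in> Lambda m"
      using Suc.prems len by (intro neg_in) (simp add: chain_length_snoc)
    have "cyc_len (tau_inv (((tau_inv ^^ i) \<circ> (sigma_inv ^^ l) \<circ> \<phi>) u)) = cyc_len (tau_inv (((tau_inv ^^ i) \<circ> (sigma_inv ^^ l) \<circ> \<phi>) v))"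
      using Hl[OF mem] \<phi>_def by (simp add: chain_neg_snoc)
    from step_Y[OF Suc.IH[OF Suc_leD[OF Suc.prems]] this tau_inv_Y]
    show ?case by (simp add: comp_def)
  qed
  show ?case using B[of k] p \<phi>_def by (simp add: chain_neg_snoc comp_def)
qed

lemma all_good: "\<psi> \<in> Lambda m \<Longrightarrow> good \<psi>"
  unfolding Lambda_def using pos_good neg_good by blast

end

theorem lemma2p4:
  fixes u v :: "letter list" and m :: nat
  assumes "0 < m"
    and "\<forall>\<psi>\<in>Lambda m. cyc_len (\<psi> u) = cyc_len (\<psi> v)"
  shows "\<forall>\<psi>\<in>Lambda m. n_occ (\<psi> u) X = n_occ (\<psi> v) X \<and> n_occ (\<psi> u) Y = n_occ (\<psi> v) Y"
proof -
  interpret setting u v m using assms by unfold_locales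
  show ?thesis using all_good unfolding good_def by blast
qed


end
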